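(* Let $\mathcal M$ be a miss-MDP whose missingness function $M$ is simple MAR, and let the estimate $\widehat M$ be computed from a dataset $\mathcal D$ by the AsMAR rule described in the context. Then: (i) For every precision $\varepsilon>0$ and confidence threshold $\delta\in(0,1)$ there exists a number $n^*\in\mathbb N$ such that, if $\mathcal D$ consists of $n^*$ histories generated independently under the fair behaviour policy $\pi_b$, then with probability at least $\delta$ (over the generation of $\mathcal D$) we have $|\widehat M(z\mid s)-M(z\mid s)|\le\varepsilon$ for all states $s\in S$ reachable in $\mathcal M$ and all observations $z\in Z$. (ii) Dually, for every dataset size (number of histories) and every confidence threshold $\delta\in(0,1)$ there exists $\varepsilon>0$ such that, with probability at least $\delta$ over the generation of $\mathcal D$, $|\widehat M(z\mid s)-M(z\mid s)|\le\varepsilon$ for all reachable $s\in S$ and all $z\in Z$.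
   Context: A missingness-MDP (miss-MDP) is a tuple $\mathcal M=(S,A,T,\iota,\varrho,Z,M,\gamma)$ with finite factored state space $S=\prod_{i\in I}S_i$ where $I=\{1,\dots,n\}$ is the set of feature indices, finite action set $A$, transition function $T:S\times A\to\Delta(S)$, initial distribution $\iota\in\Delta(S)$, reward $\varrho:S\times A\to\mathbb R$, discount factor $\gamma\in[0,1)$, observation space $Z=\prod_{i\in I}(S_i\cup\{\bot\})$ ($\bot$ means "missing"), and missingness function $M:S\to\Delta(Z)$ such that for all $s\in S$, all $z$ in the support of $M(s)$ and all $i\in I$, $z_i\in\{s_i,\bot\}$. Write $M(z\mid s)=M(s)(z)$. Let $R=\{0,1\}^n$ and $f_R:Z\to R$ with $f_R(z)_i=0$ iff $z_i=\bot$. A run of $\mathcal M$ under a policy: $s^{(0)}\sim\iota$, $z^{(t)}\sim M(s^{(t)})$, action $a^{(t)}$ chosen by the policy from past observations/actions, $s^{(t+1)}\sim T(s^{(t)},a^{(t)})$; its history is $(z^{(0)},a^{(0)},z^{(1)},a^{(1)},\dots)$. A state is reachable if it is visited with positive probability under some policy. A dataset $\mathcal D=(h_1,\dots,h_k)$ consists of finite histories generated independently under a fixed behaviour policy $\pi_b$ that is fair: every reachable state is visited with positive probability within each generated history. For $z\in Z$, $\#_{\mathcal D}(z)$ is the total number of occurrences of $z$ as an observation in the histories of $\mathcal D$, and $\#_{\mathcal D}(Z')=\sum_{z\in Z'}\#_{\mathcal D}(z)$ for $Z'\subseteq Z$. Let $I_{\text{always}}=\{i\in I:\forall s\in S,\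 \Pr_{z\sim M(s)}(z_i=\bot)=0\}$. $M$ is simple MAR iff for all $s,s'\in S$ with $s_i=s'_i$ for all $i\in I_{\text{always}}$ and all $r\in R$: $\Pr_{z\sim M(s)}(f_R(z)=r)=\Pr_{z\sim M(s')}(f_R(z)=r)$. AsMAR rule: let $\hat I_{\text{always}}=\{i\in I:\#_{\mathcal D}(\{z\in Z: z_i=\bot\})=0\}$. For $s\in S$ and $r\in R$ let $Z_s^r=\{z\in Z:\forall i\in I,\ (i\in\hat I_{\text{always}}\Rightarrow z_i=s_i)\text{ and }(r_i=0\Rightarrow z_i=\bot)\}$ and $\#_{\mathcal D}(s,r)=\#_{\mathcal D}(Z_s^r)$. Then $\widehat M(z\mid s)=\#_{\mathcal D}(s,f_R(z))\big/\sum_{r\in R}\#_{\mathcal D}(s,r)$. *)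

theory Defs
  imports "HOL-Probability.Probability"
begin

text \<open>A state is an element of the product S = PiE UNIV Sv; an observation is a
  function 'i => 'v option, where None stands for the missing value (bottom).\<close>

type_synonym ('i,'v) state = "'i \<Rightarrow> 'v"
type_synonym ('i,'v) obs = "'i \<Rightarrow> 'v option"
type_synonym ('i,'v,'a) hist = "(('i,'v) obs \<times> 'a) list"
type_synonym ('i,'v,'a) policy = "('i,'v,'a) hist \<Rightarrow> ('i,'v) obs \<Rightarrow> 'a pmf"

definition state_space :: "('i \<Rightarrow> 'v set) \<Rightarrow> ('i,'v) state set" where
  "state_space Sv = Pi\<^sub>E UNIV Sv"

definition obs_space :: "('i \<Rightarrow> 'v set) \<Rightarrow> ('i,'v) obs set" where
  "obs_space Sv = Pi\<^sub>E UNIV (\<lambda>i. Some ` Sv i \<union> {None})"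

text \<open>The map f_R : Z -> R = {0,1}^I (True = observed, False = missing).\<close>
definition fR :: "('i,'v) obs \<Rightarrow> ('i \<Rightarrow> bool)" where
  "fR z = (\<lambda>i. z i \<noteq> None)"

definition compatible :: "('i,'v) obs \<Rightarrow> ('i,'v) state \<Rightarrow> bool" where
  "compatible z s \<longleftrightarrow> (\<forall>i. z i = Some (s i) \<or> z i = None)"

definition miss_MDP ::
  "('i::finite \<Rightarrow> 'v set) \<Rightarrow> (('i,'v) state \<Rightarrow> 'a::finite \<Rightarrow> ('i,'v) state pmf)
    \<Rightarrow> ('i,'v) state pmf \<Rightarrow> (('i,'v) state \<Rightarrow> ('i,'v) obs pmf) \<Rightarrow> bool" where
  "miss_MDP Sv T \<iota> M \<longleftrightarrow>
     (\<forall>i. finite (Sv i)) \<and>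
     set_pmf \<iota> \<subseteq> state_space Sv \<and>
     (\<forall>s\<in>state_space Sv. \<forall>a. set_pmf (T s a) \<subseteq> state_space Sv) \<and>
     (\<forall>s\<in>state_space Sv. \<forall>z\<in>set_pmf (M s). compatible z s)"

abbreviation Mprob :: "(('i,'v) state \<Rightarrow> ('i,'v) obs pmf) \<Rightarrow> ('i,'v) state \<Rightarrow> ('i,'v) obs \<Rightarrow> real" where
  "Mprob M s z \<equiv> pmf (M s) z"

definition I_always :: "('i \<Rightarrow> 'v set) \<Rightarrow> (('i,'v) state \<Rightarrow> ('i,'v) obs pmf) \<Rightarrow> 'i set" where
  "I_always Sv M = {i. \<forall>s\<in>state_space Sv. measure_pmf.prob (M s) {z. z i = None} = 0}"

definition simple_MAR :: "('i \<Rightarrow> 'v set) \<Rightarrow> (('i,'v) state \<Rightarrow> ('i,'v) obs pmf) \<Rightarrow> bool" where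
  "simple_MAR Sv M \<longleftrightarrow>
     (\<forall>s\<in>state_space Sv. \<forall>s'\<in>state_space Sv. (\<forall>i\<in>I_always Sv M. s i = s' i) \<longrightarrow>
        (\<forall>r. measure_pmf.prob (M s) {z. fR z = r} = measure_pmf.prob (M s') {z. fR z = r}))"

fun run_from ::
  "(('i,'v) state \<Rightarrow> 'a \<Rightarrow> ('i,'v) state pmf) \<Rightarrow> (('i,'v) state \<Rightarrow> ('i,'v) obs pmf)
    \<Rightarrow> ('i,'v,'a) policy \<Rightarrow> nat \<Rightarrow> ('i,'v,'a) hist \<Rightarrow> ('i,'v) state
    \<Rightarrow> (('i,'v) state \<times> ('i,'v) obs \<times> 'a) list pmf" where
  "run_from T M pol 0 h s = return_pmf []"
| "run_from T M pol (Suc k) h s =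
     bind_pmf (M s) (\<lambda>z. bind_pmf (pol h z) (\<lambda>a. bind_pmf (T s a) (\<lambda>s'.
       map_pmf (\<lambda>rest. (s, z, a) # rest) (run_from T M pol k (h @ [(z, a)]) s'))))"

definition run ::
  "(('i,'v) state \<Rightarrow> 'a \<Rightarrow> ('i,'v) state pmf) \<Rightarrow> ('i,'v) state pmf \<Rightarrow> (('i,'v) state \<Rightarrow> ('i,'v) obs pmf)
    \<Rightarrow> ('i,'v,'a) policy \<Rightarrow> nat \<Rightarrow> (('i,'v) state \<times> ('i,'v) obs \<times> 'a) list pmf" where
  "run T \<iota> M pol k = bind_pmf \<iota> (run_from T M pol k [])"

definition visited :: "(('i,'v) state \<times> ('i,'v) obs \<times> 'a) list \<Rightarrow> ('i,'v) state set" where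
  "visited tr = fst ` set tr"

definition history_of :: "(('i,'v) state \<times> ('i,'v) obs \<times> 'a) list \<Rightarrow> ('i,'v,'a) hist" where
  "history_of tr = map snd tr"

definition history_pmf ::
  "(('i,'v) state \<Rightarrow> 'a \<Rightarrow> ('i,'v) state pmf) \<Rightarrow> ('i,'v) state pmf \<Rightarrow> (('i,'v) state \<Rightarrow> ('i,'v) obs pmf)
    \<Rightarrow> ('i,'v,'a) policy \<Rightarrow> nat \<Rightarrow> ('i,'v,'a) hist pmf" where
  "history_pmf T \<iota> M pol k = map_pmf history_of (run T \<iota> M pol k)"

definition reachable ::
  "(('i,'v) state \<Rightarrow> 'a \<Rightarrow> ('i,'v) state pmf) \<Rightarrow> ('i,'v) state pmf \<Rightarrow> (('i,'v) state \<Rightarrow> ('i,'v) obs pmf)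
    \<Rightarrow> ('i,'v) state \<Rightarrow> bool" where
  "reachable T \<iota> M s \<longleftrightarrow>
     (\<exists>pol k. measure_pmf.prob (run T \<iota> M pol k) {tr. s \<in> visited tr} > 0)"

definition fair ::
  "(('i,'v) state \<Rightarrow> 'a \<Rightarrow> ('i,'v) state pmf) \<Rightarrow> ('i,'v) state pmf \<Rightarrow> (('i,'v) state \<Rightarrow> ('i,'v) obs pmf)
    \<Rightarrow> ('i,'v,'a) policy \<Rightarrow> nat \<Rightarrow> bool" where
  "fair T \<iota> M pol L \<longleftrightarrow>
     (\<forall>s. reachable T \<iota> M s \<longrightarrow> measure_pmf.prob (run T \<iota> M pol L) {tr. s \<in> visited tr} > 0)"

fun iid_pmf :: "nat \<Rightarrow> 'x pmf \<Rightarrow> 'x list pmf" where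
  "iid_pmf 0 p = return_pmf []"
| "iid_pmf (Suc k) p = bind_pmf p (\<lambda>x. map_pmf (\<lambda>xs. x # xs) (iid_pmf k p))"

definition count_obs :: "('i,'v,'a) hist list \<Rightarrow> ('i,'v) obs \<Rightarrow> nat" where
  "count_obs D z = (\<Sum>h\<leftarrow>D. length (filter (\<lambda>p. fst p = z) h))"

definition count_set :: "('i,'v,'a) hist list \<Rightarrow> ('i,'v) obs set \<Rightarrow> nat" where
  "count_set D Z' = (\<Sum>z\<in>Z'. count_obs D z)"

definition I_always_hat :: "('i \<Rightarrow> 'v set) \<Rightarrow> ('i,'v,'a) hist list \<Rightarrow> 'i set" where
  "I_always_hat Sv D = {i. count_set D {z\<in>obs_space Sv. z i = None} = 0}"

definition Z_sr :: "('i \<Rightarrow> 'v set) \<Rightarrow> ('i,'v,'a) hist list \<Rightarrow> ('i,'v) state \<Rightarrow> ('i \<Rightarrow> bool) \<Rightarrow> ('i,'v) obs set" where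
  "Z_sr Sv D s r = {z\<in>obs_space Sv. \<forall>i.
      (i \<in> I_always_hat Sv D \<longrightarrow> z i = Some (s i)) \<and> (\<not> r i \<longleftrightarrow> z i = None)}"

definition count_sr :: "('i \<Rightarrow> 'v set) \<Rightarrow> ('i,'v,'a) hist list \<Rightarrow> ('i,'v) state \<Rightarrow> ('i \<Rightarrow> bool) \<Rightarrow> nat" where
  "count_sr Sv D s r = count_set D (Z_sr Sv D s r)"

definition AsMAR :: "('i::finite \<Rightarrow> 'v set) \<Rightarrow> ('i,'v,'a) hist list \<Rightarrow> ('i,'v) state \<Rightarrow> ('i,'v) obs \<Rightarrow> real" where
  "AsMAR Sv D s z =
     (if compatible z s
      then real (count_sr Sv D s (fR z)) / (\<Sum>r\<in>(UNIV :: ('i \<Rightarrow> bool) set). real (count_sr Sv D s r))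
      else 0)"

end

theory Submission
  imports Defs
begin


lemma run_from_len:
  "tr \<in> set_pmf (run_from T M pol k h s) \<Longrightarrow> length tr = k"
proof (induction k arbitrary: h s tr)
  case 0 then show ?case by simp
next
  case (Suc k) then show ?case by (auto simp: set_bind_pmf)
qed

lemma run_from_supp:
  assumes mdp: "miss_MDP Sv T \<iota> M"
  shows "s \<in> state_space Sv \<Longrightarrow> tr \<in> set_pmf (run_from T M pol k h s) \<Longrightarrow>
     (\<forall>x\<in>set tr. fst x \<in> state_space Sv \<and> compatible (fst (snd x)) (fst x))"
proof (induction k arbitrary: h s tr)
  case 0 then show ?case by simp
next
  case (Suc k)
  from Suc.prems(2) obtain z a s' rest where z: "z \<in> set_pmf (M s)" and a: "a \<in> set_pmf (pol h z)"
    and s': "s' \<in> set_pmf (T s a)" and rest: "rest \<in> set_pmf (run_from T M pol k (h @ [(z, a)]) s')"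
    and tr: "tr = (s, z, a) # rest" by (auto simp: set_bind_pmf)
  have "s' \<in> state_space Sv" using mdp Suc.prems(1) s' unfolding miss_MDP_def by blast
  then have "\<forall>x\<in>set rest. fst x \<in> state_space Sv \<and> compatible (fst (snd x)) (fst x)"
    using Suc.IH rest by blast
  moreover have "compatible z s" using mdp Suc.prems(1) z unfolding miss_MDP_def by blast
  ultimately show ?case using tr Suc.prems(1) by auto
qed

lemma run_from_sum:
  fixes \<phi> :: "('i,'v) state \<Rightarrow> ('i,'v) obs \<Rightarrow> ennreal"
  shows "(\<integral>\<^sup>+tr. (\<Sum>x\<leftarrow>tr. \<phi> (fst x) (fst (snd x))) \<partial>run_from T M pol k h s)
       = (\<integral>\<^sup>+tr. (\<Sum>x\<leftarrow>tr. \<integral>\<^sup>+z. \<phi> (fst x) z \<partial>M (fst x)) \<partial>run_from T M pol k h s)"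
proof (induction k arbitrary: h s)
  case 0 then show ?case by simp
next
  case (Suc k)
  let ?X = "\<lambda>z. \<integral>\<^sup>+a. \<integral>\<^sup>+s'. \<integral>\<^sup>+rest. (\<Sum>x\<leftarrow>rest. \<integral>\<^sup>+z. \<phi> (fst x) z \<partial>M (fst x)) \<partial>run_from T M pol k (h @ [(z, a)]) s' \<partial>T s a \<partial>pol h z"
  have "(\<integral>\<^sup>+tr. (\<Sum>x\<leftarrow>tr. \<phi> (fst x) (fst (snd x))) \<partial>run_from T M pol (Suc k) h s)
     = \<integral>\<^sup>+z. (\<phi> s z + ?X z) \<partial>M s"
    by (simp add: nn_integral_add Suc.IH)
  also have "\<dots> = (\<integral>\<^sup>+z. \<phi> s z \<partial>M s) + \<integral>\<^sup>+z. ?X z \<partial>M s"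
    by (simp add: nn_integral_add)
  also have "\<dots> = \<integral>\<^sup>+z. ((\<integral>\<^sup>+z. \<phi> s z \<partial>M s) + ?X z) \<partial>M s"
    by (simp add: nn_integral_add)
  also have "\<dots> = (\<integral>\<^sup>+tr. (\<Sum>x\<leftarrow>tr. \<integral>\<^sup>+z. \<phi> (fst x) z \<partial>M (fst x)) \<partial>run_from T M pol (Suc k) h s)"
    by (simp add: nn_integral_add)
  finally show ?case .
qed




lemma iid_supp: "xs \<in> set_pmf (iid_pmf n p) \<Longrightarrow> length xs = n \<and> set xs \<subseteq> set_pmf p"
  proof (induction n arbitrary: xs)
  case (Suc n) then show ?case by (auto simp: set_bind_pmf) (metis subsetD)
qed simp

lemma iid_fin: assumes "finite (set_pmf p)" shows "finite (set_pmf (iid_pmf n p))"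
proof -
  have "set_pmf (iid_pmf n p) \<subseteq> {xs. set xs \<subseteq> set_pmf p \<and> length xs = n}"
    using iid_supp by blast
  moreover have "finite {xs. set xs \<subseteq> set_pmf p \<and> length xs = n}"
    using finite_lists_length_eq[OF assms] by simp
  ultimately show ?thesis by (rule finite_subset)
qed

lemma integral_bind_pmf_fin:
  fixes f :: "_ \<Rightarrow> real"
  assumes fin: "finite (set_pmf (bind_pmf M N))"
  shows "measure_pmf.expectation (bind_pmf M N) f = measure_pmf.expectation M (\<lambda>x. measure_pmf.expectation (N x) f)"
proof -
  define B where "B = (\<Sum>y\<in>set_pmf (bind_pmf M N). \<bar>f y\<bar>)"
  have B: "\<bar>f y\<bar> \<le> B" if "y \<in> set_pmf (bind_pmf M N)" for y
    unfolding B_def using fin that by (intro member_le_sum) auto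
  define g where "g y = max (-B) (min B (f y))" for y
  have gB: "\<bar>g y\<bar> \<le> \<bar>B\<bar>" for y unfolding g_def by auto
  have fg: "f y = g y" if "y \<in> set_pmf (bind_pmf M N)" for y
    using B[OF that] unfolding g_def by auto
  have 1: "measure_pmf.expectation (bind_pmf M N) f = measure_pmf.expectation (bind_pmf M N) g"
    by (rule integral_cong_AE) (auto simp: AE_measure_pmf_iff fg)
  have 2: "measure_pmf.expectation M (\<lambda>x. measure_pmf.expectation (N x) f) =
           measure_pmf.expectation M (\<lambda>x. measure_pmf.expectation (N x) g)"
  proof (rule integral_cong_AE)
    show "AE x in measure_pmf M. measure_pmf.expectation (N x) f = measure_pmf.expectation (N x) g"
      unfolding AE_measure_pmf_iff
    proof
      fix x assume x: "x \<in> set_pmf M"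
      show "measure_pmf.expectation (N x) f = measure_pmf.expectation (N x) g"
        by (rule integral_cong_AE) (use x in \<open>auto simp: AE_measure_pmf_iff intro!: fg simp: set_bind_pmf\<close>)
    qed
  qed auto
  have 3: "measure_pmf.expectation (bind_pmf M N) g = measure_pmf.expectation M (\<lambda>x. measure_pmf.expectation (N x) g)"
    unfolding measure_pmf_bind
    by (rule integral_bind[where K="count_space UNIV" and B="\<bar>B\<bar>" and B'=1])
       (auto simp: gB measure_pmf_in_subprob_algebra measure_pmf.emeasure_space_1 prob_space_imp_subprob_space measure_pmf.prob_space_axioms
             intro: measure_pmf.finite_measure_axioms)
  show ?thesis using 1 2 3 by simp
qed




lemma iid_mean:
  fixes f :: "_ \<Rightarrow> real"
  assumes fin: "finite (set_pmf p)"
  shows "measure_pmf.expectation (iid_pmf n p) (\<lambda>xs. \<Sum>x\<leftarrow>xs. f x) = n * measure_pmf.expectation p f"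
proof (induction n)
  case 0 then show ?case by simp
next
  case (Suc n)
  have "measure_pmf.expectation (iid_pmf (Suc n) p) (\<lambda>xs. \<Sum>x\<leftarrow>xs. f x)
      = measure_pmf.expectation p (\<lambda>x. measure_pmf.expectation (iid_pmf n p) (\<lambda>xs. f x + (\<Sum>x\<leftarrow>xs. f x)))"
    using iid_fin[OF fin, of "Suc n"] by (simp add: integral_bind_pmf_fin)
  also have "\<dots> = measure_pmf.expectation p (\<lambda>x. f x + n * measure_pmf.expectation p f)"
    using Suc.IH by (simp add: Bochner_Integration.integral_add integrable_measure_pmf_finite iid_fin[OF fin])
  also have "\<dots> = Suc n * measure_pmf.expectation p f"
    by (simp add: Bochner_Integration.integral_add integrable_measure_pmf_finite fin algebra_simps)
  finally show ?case .
qed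

lemma iid_sq:
  fixes g :: "_ \<Rightarrow> real"
  assumes fin: "finite (set_pmf p)" and g0: "measure_pmf.expectation p g = 0"
  shows "measure_pmf.expectation (iid_pmf n p) (\<lambda>xs. (\<Sum>x\<leftarrow>xs. g x)^2) = n * measure_pmf.expectation p (\<lambda>x. (g x)^2)"
proof (induction n)
  case 0 then show ?case by simp
next
  case (Suc n)
  have m: "measure_pmf.expectation (iid_pmf n p) (\<lambda>xs. \<Sum>x\<leftarrow>xs. g x) = 0"
    using iid_mean[OF fin, of n g] g0 by simp
  have I: "integrable (measure_pmf (iid_pmf n p)) h" for h :: "_ \<Rightarrow> real"
    by (simp add: integrable_measure_pmf_finite iid_fin[OF fin])
  have "measure_pmf.expectation (iid_pmf (Suc n) p) (\<lambda>xs. (\<Sum>x\<leftarrow>xs. g x)^2)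
      = measure_pmf.expectation p (\<lambda>x. measure_pmf.expectation (iid_pmf n p) (\<lambda>xs. (g x)^2 + 2 * g x * (\<Sum>x\<leftarrow>xs. g x) + (\<Sum>x\<leftarrow>xs. g x)^2))"
    using iid_fin[OF fin, of "Suc n"] by (simp add: integral_bind_pmf_fin power2_eq_square algebra_simps)
  also have "\<dots> = measure_pmf.expectation p (\<lambda>x. (g x)^2 + n * measure_pmf.expectation p (\<lambda>x. (g x)^2))"
    using Suc.IH m by (simp add: Bochner_Integration.integral_add I)
  also have "\<dots> = Suc n * measure_pmf.expectation p (\<lambda>x. (g x)^2)"
    by (simp add: Bochner_Integration.integral_add integrable_measure_pmf_finite fin algebra_simps)
  finally show ?case .
qed

lemma iid_conc:
  fixes f :: "_ \<Rightarrow> real"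
  assumes fin: "finite (set_pmf p)"
    and bnd: "\<And>x. x \<in> set_pmf p \<Longrightarrow> \<bar>f x - measure_pmf.expectation p f\<bar> \<le> B"
    and n: "n > 0" and t: "t > 0"
  shows "measure_pmf.prob (iid_pmf n p) {xs. n * t \<le> \<bar>(\<Sum>x\<leftarrow>xs. f x) - n * measure_pmf.expectation p f\<bar>}
         \<le> B^2 / (n * t^2)"
proof -
  define \<mu> where "\<mu> = measure_pmf.expectation p f"
  define g where "g x = f x - \<mu>" for x
  have g0: "measure_pmf.expectation p g = 0"
    unfolding g_def \<mu>_def by (simp add: integrable_measure_pmf_finite fin)
  define S where "S xs = (\<Sum>x\<leftarrow>xs. g x)" for xs
  have I: "integrable (measure_pmf (iid_pmf n p)) h" for h :: "_ \<Rightarrow> real"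
    by (simp add: integrable_measure_pmf_finite iid_fin[OF fin])
  have ES: "measure_pmf.expectation (iid_pmf n p) S = 0"
    unfolding S_def using iid_mean[OF fin, of n g] g0 by simp
  have gB: "measure_pmf.expectation p (\<lambda>x. (g x)^2) \<le> B^2"
  proof -
    have "measure_pmf.expectation p (\<lambda>x. (g x)^2) \<le> measure_pmf.expectation p (\<lambda>x. B^2)"
    proof (rule integral_mono_AE)
      show "AE x in measure_pmf p. (g x)\<^sup>2 \<le> B\<^sup>2"
        unfolding AE_measure_pmf_iff g_def \<mu>_def
        using bnd by (auto intro!: power2_le_iff_abs_le[THEN iffD2] order_trans[OF abs_ge_zero])
    qed (auto simp: integrable_measure_pmf_finite fin)
    then show ?thesis by simp
  qed
  have "measure_pmf.prob (iid_pmf n p) {xs. n * t \<le> \<bar>(\<Sum>x\<leftarrow>xs. f x) - n * \<mu>\<bar>}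
      = measure_pmf.prob (iid_pmf n p) {xs. n * t \<le> \<bar>S xs - measure_pmf.expectation (iid_pmf n p) S\<bar>}"
  proof -
    have "{xs. n * t \<le> \<bar>(\<Sum>x\<leftarrow>xs. f x) - n * \<mu>\<bar>} \<inter> set_pmf (iid_pmf n p)
        = {xs. n * t \<le> \<bar>S xs - measure_pmf.expectation (iid_pmf n p) S\<bar>} \<inter> set_pmf (iid_pmf n p)"
    proof -
      have "S xs = (\<Sum>x\<leftarrow>xs. f x) - n * \<mu>" if "xs \<in> set_pmf (iid_pmf n p)" for xs
        using iid_supp[OF that] unfolding S_def g_def by (simp add: sum_list_subtractf sum_list_triv)
      then show ?thesis using ES by auto
    qed
    then show ?thesis by (metis measure_Int_set_pmf)
  qed
  also have "\<dots> \<le> measure_pmf.variance (iid_pmf n p) S / (n * t)^2"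
    using measure_pmf.Chebyshev_inequality[where M="iid_pmf n p" and f=S and a="n * t"] n t I by simp
  also have "measure_pmf.variance (iid_pmf n p) S = n * measure_pmf.expectation p (\<lambda>x. (g x)^2)"
    using iid_sq[OF fin g0, of n] ES unfolding S_def by simp
  also have "n * measure_pmf.expectation p (\<lambda>x. (g x)^2) / (n * t)^2 \<le> n * B^2 / (n * t)^2"
    using gB n by (intro divide_right_mono mult_left_mono) auto
  also have "n * B^2 / (n * t)^2 = B^2 / (n * t^2)"
    using n by (simp add: power2_eq_square)
  finally show ?thesis unfolding \<mu>_def .
qed

lemma iid_zero:
  fixes f :: "_ \<Rightarrow> real"
  assumes fin: "finite (set_pmf p)" and nn: "\<And>x. x \<in> set_pmf p \<Longrightarrow> f x \<ge> 0"
    and z: "measure_pmf.expectation p f = 0"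
  shows "measure_pmf.prob (iid_pmf n p) {xs. (\<Sum>x\<leftarrow>xs. f x) \<noteq> 0} = 0"
proof -
  have f0: "f x = 0" if "x \<in> set_pmf p" for x
  proof -
    have "measure_pmf.expectation p f = (\<Sum>a\<in>set_pmf p. f a * pmf p a)"
      by (rule integral_measure_pmf_real) (auto simp: fin)
    then have "(\<Sum>a\<in>set_pmf p. f a * pmf p a) = 0" using z by simp
    then have "f x * pmf p x = 0"
      using fin that nn by (subst (asm) sum_nonneg_eq_0_iff) auto
    then show ?thesis using that by (simp add: set_pmf_iff)
  qed
  show ?thesis
  proof (subst measure_pmf_zero_iff)
    show "set_pmf (iid_pmf n p) \<inter> {xs. (\<Sum>x\<leftarrow>xs. f x) \<noteq> 0} = {}"
    proof (safe)
      fix xs assume xs: "xs \<in> set_pmf (iid_pmf n p)" "(\<Sum>x\<leftarrow>xs. f x) \<noteq> 0"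
      have "\<forall>x\<in>set xs. f x = 0" using iid_supp[OF xs(1)] f0 by auto
      then have "(\<Sum>x\<leftarrow>xs. f x) = 0" by (induction xs) auto
      then show "xs \<in> {}" using xs(2) by simp
    qed
  qed
qed




lemma finite_SS: "miss_MDP Sv T \<iota> M \<Longrightarrow> finite (state_space Sv)"
  unfolding miss_MDP_def state_space_def by (auto intro!: finite_PiE)

lemma finite_OS: "miss_MDP Sv T \<iota> M \<Longrightarrow> finite (obs_space Sv)"
  unfolding miss_MDP_def obs_space_def by (auto intro!: finite_PiE)

lemma compat_OS: "s \<in> state_space Sv \<Longrightarrow> compatible z s \<Longrightarrow> z \<in> obs_space Sv"
  unfolding state_space_def obs_space_def compatible_def PiE_def Pi_def extensional_def
  by auto

lemma run_supp:
  assumes mdp: "miss_MDP Sv T \<iota> M" and tr: "tr \<in> set_pmf (run T \<iota> M pol k)"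
  shows "length tr = k \<and> (\<forall>x\<in>set tr. fst x \<in> state_space Sv \<and> compatible (fst (snd x)) (fst x))"
proof -
  from tr obtain s where s: "s \<in> set_pmf \<iota>" and tr': "tr \<in> set_pmf (run_from T M pol k [] s)"
    unfolding run_def by (auto simp: set_bind_pmf)
  have "s \<in> state_space Sv" using mdp s unfolding miss_MDP_def by blast
  then show ?thesis using run_from_len[OF tr'] run_from_supp[OF mdp _ tr'] by blast
qed

lemma run_fin:
  fixes T :: "('i::finite,'v) state \<Rightarrow> 'a::finite \<Rightarrow> ('i,'v) state pmf"
  assumes mdp: "miss_MDP Sv T \<iota> M"
  shows "finite (set_pmf (run T \<iota> M pol k))"
proof -
  let ?A = "state_space Sv \<times> obs_space Sv \<times> (UNIV :: 'a set)"
  have "set_pmf (run T \<iota> M pol k) \<subseteq> {xs. set xs \<subseteq> ?A \<and> length xs = k}"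
  proof
    fix tr assume tr: "tr \<in> set_pmf (run T \<iota> M pol k)"
    show "tr \<in> {xs. set xs \<subseteq> ?A \<and> length xs = k}"
      using run_supp[OF mdp tr] compat_OS by fastforce
  qed
  moreover have "finite {xs. set xs \<subseteq> ?A \<and> length xs = k}"
    using finite_lists_length_eq[of ?A k] finite_SS[OF mdp] finite_OS[OF mdp] by simp
  ultimately show ?thesis by (rule finite_subset)
qed

lemma HP_fin:
  fixes T :: "('i::finite,'v) state \<Rightarrow> 'a::finite \<Rightarrow> ('i,'v) state pmf"
  assumes mdp: "miss_MDP Sv T \<iota> M"
  shows "finite (set_pmf (history_pmf T \<iota> M pol k))"
  unfolding history_pmf_def using run_fin[OF mdp] by simp

lemma HP_len:
  assumes mdp: "miss_MDP Sv T \<iota> M" and h: "h \<in> set_pmf (history_pmf T \<iota> M pol k)"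
  shows "length h = k"
  using h run_supp[OF mdp] unfolding history_pmf_def history_of_def by auto

definition cntw :: "('i,'v) obs \<Rightarrow> ('i,'v,'a) hist \<Rightarrow> nat" where
  "cntw w h = length (filter (\<lambda>p. fst p = w) h)"

lemma count_obs_cntw: "count_obs D w = (\<Sum>h\<leftarrow>D. cntw w h)"
  unfolding count_obs_def cntw_def ..

lemma exp_eq_nn:
  fixes f g :: "_ \<Rightarrow> real"
  assumes fin: "finite (set_pmf p)" and f: "\<And>x. f x \<ge> 0" and g: "\<And>x. g x \<ge> 0"
    and eq: "(\<integral>\<^sup>+x. ennreal (f x) \<partial>p) = (\<integral>\<^sup>+x. ennreal (g x) \<partial>p)"
  shows "measure_pmf.expectation p f = measure_pmf.expectation p g"
proof -
  have "ennreal (measure_pmf.expectation p f) = (\<integral>\<^sup>+x. ennreal (f x) \<partial>p)"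
    by (rule nn_integral_eq_integral[symmetric]) (auto simp: integrable_measure_pmf_finite fin f)
  also have "\<dots> = (\<integral>\<^sup>+x. ennreal (g x) \<partial>p)" by (rule eq)
  also have "\<dots> = ennreal (measure_pmf.expectation p g)"
    by (rule nn_integral_eq_integral) (auto simp: integrable_measure_pmf_finite fin g)
  finally show ?thesis
    by (subst (asm) ennreal_inj) (auto intro!: integral_nonneg_AE simp: f g)
qed

lemma cnt_enn: "ennreal (real (cntw w (history_of tr))) = (\<Sum>x\<leftarrow>tr. (if fst (snd x) = w then 1 else 0))"
  unfolding cntw_def history_of_def
proof (induction tr)
  case (Cons a tr)
  then show ?case unfolding cntw_def history_of_def by (auto simp: ennreal_plus)
qed (simp add: cntw_def history_of_def)

lemma sum_list_enn: "(\<And>x. f x \<ge> 0) \<Longrightarrow> ennreal (\<Sum>x\<leftarrow>xs. f x) = (\<Sum>x\<leftarrow>xs. ennreal (f x))"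
proof (induction xs)
  case (Cons a xs)
  assume f: "\<And>x. f x \<ge> 0"
  have "0 \<le> (\<Sum>x\<leftarrow>xs. f x)" using f by (intro sum_list_nonneg) auto
  then show ?case using Cons f by (simp add: ennreal_plus)
qed simp

definition mu where
  "mu T \<iota> M pol L w = measure_pmf.expectation (history_pmf T \<iota> M pol L) (\<lambda>h. real (cntw w h))"

lemma mu_run:
  fixes T :: "('i::finite,'v) state \<Rightarrow> 'a::finite \<Rightarrow> ('i,'v) state pmf"
  assumes mdp: "miss_MDP Sv T \<iota> M"
  shows "mu T \<iota> M pol L w = measure_pmf.expectation (run T \<iota> M pol L) (\<lambda>tr. \<Sum>x\<leftarrow>tr. pmf (M (fst x)) w)"
proof -
  have "mu T \<iota> M pol L w = measure_pmf.expectation (run T \<iota> M pol L) (\<lambda>tr. real (cntw w (history_of tr)))"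
    unfolding mu_def history_pmf_def by simp
  also have "\<dots> = measure_pmf.expectation (run T \<iota> M pol L) (\<lambda>tr. \<Sum>x\<leftarrow>tr. pmf (M (fst x)) w)"
  proof (rule exp_eq_nn[OF run_fin[OF mdp]])
    show "0 \<le> (\<Sum>x\<leftarrow>tr. pmf (M (fst x)) w)" for tr by (rule sum_list_nonneg) auto
    have "(\<integral>\<^sup>+tr. ennreal (real (cntw w (history_of tr))) \<partial>run T \<iota> M pol L)
       = (\<integral>\<^sup>+s0. \<integral>\<^sup>+tr. (\<Sum>x\<leftarrow>tr. (\<lambda>s z. if z = w then 1 else 0) (fst x) (fst (snd x))) \<partial>run_from T M pol L [] s0 \<partial>\<iota>)"
      unfolding run_def cnt_enn by simp
    also have "\<dots> = (\<integral>\<^sup>+s0. \<integral>\<^sup>+tr. (\<Sum>x\<leftarrow>tr. \<integral>\<^sup>+z. (\<lambda>s z. if z = w then 1 else 0) (fst x) z \<partial>M (fst x)) \<partial>run_from T M pol L [] s0 \<partial>\<iota>)"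
      by (subst run_from_sum) (rule refl)
    also have "\<dots> = (\<integral>\<^sup>+tr. (\<Sum>x\<leftarrow>tr. ennreal (pmf (M (fst x)) w)) \<partial>run T \<iota> M pol L)"
    proof -
      have "(\<integral>\<^sup>+z. (if z = w then 1 else 0) \<partial>M s) = ennreal (pmf (M s) w)" for s
      proof -
        have "(\<integral>\<^sup>+z. (if z = w then 1 else 0) \<partial>M s) = (\<integral>\<^sup>+z. indicator {w} z \<partial>M s)"
          by (intro nn_integral_cong) (auto split: split_indicator)
        then show ?thesis by (simp add: emeasure_pmf_single)
      qed
      then show ?thesis unfolding run_def by simp
    qed
    also have "\<dots> = (\<integral>\<^sup>+tr. ennreal (\<Sum>x\<leftarrow>tr. pmf (M (fst x)) w) \<partial>run T \<iota> M pol L)"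
      by (subst sum_list_enn) auto
    finally show "(\<integral>\<^sup>+tr. ennreal (real (cntw w (history_of tr))) \<partial>run T \<iota> M pol L)
       = (\<integral>\<^sup>+tr. ennreal (\<Sum>x\<leftarrow>tr. pmf (M (fst x)) w) \<partial>run T \<iota> M pol L)" .
  qed auto
  finally show ?thesis .
qed




lemma elem_le_sum_list_real:
  fixes f :: "_ \<Rightarrow> real"
  shows "x \<in> set xs \<Longrightarrow> (\<And>y. f y \<ge> 0) \<Longrightarrow> f x \<le> (\<Sum>y\<leftarrow>xs. f y)"
proof (induction xs)
  case (Cons a xs)
  have "0 \<le> (\<Sum>y\<leftarrow>xs. f y)" using Cons.prems by (intro sum_list_nonneg) auto
  then show ?case using Cons by (auto simp: add_increasing2 add_increasing)
qed simp

lemma prob_eq_supp: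
  assumes "A \<inter> set_pmf p = B \<inter> set_pmf p"
  shows "measure_pmf.prob p A = measure_pmf.prob p B"
proof -
  have "measure_pmf.prob p A = measure_pmf.prob p (A \<inter> set_pmf p)" by (rule measure_Int_set_pmf[symmetric])
  also have "\<dots> = measure_pmf.prob p (B \<inter> set_pmf p)" using assms by simp
  also have "\<dots> = measure_pmf.prob p B" by (rule measure_Int_set_pmf)
  finally show ?thesis .
qed

definition qr :: "(('i,'v) state \<Rightarrow> ('i,'v) obs pmf) \<Rightarrow> ('i,'v) state \<Rightarrow> ('i \<Rightarrow> bool) \<Rightarrow> real" where
  "qr M s r = measure_pmf.prob (M s) {z. fR z = r}"

definition Zj :: "('i \<Rightarrow> 'v set) \<Rightarrow> 'i set \<Rightarrow> ('i,'v) state \<Rightarrow> ('i \<Rightarrow> bool) \<Rightarrow> ('i,'v) obs set" where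
  "Zj Sv J s r = {z\<in>obs_space Sv. \<forall>i. (i \<in> J \<longrightarrow> z i = Some (s i)) \<and> (\<not> r i \<longleftrightarrow> z i = None)}"

definition Vj where
  "Vj T \<iota> M pol L J s = measure_pmf.expectation (run T \<iota> M pol L) (\<lambda>tr. real (length (filter (\<lambda>x. \<forall>j\<in>J. fst x j = s j) tr)))"

definition nu where
  "nu T \<iota> M pol L s = measure_pmf.prob (run T \<iota> M pol L) {tr. s \<in> visited tr}"

context
  fixes Sv :: "'i::finite \<Rightarrow> 'v set"
    and T :: "('i,'v) state \<Rightarrow> 'a::finite \<Rightarrow> ('i,'v) state pmf"
    and \<iota> :: "('i,'v) state pmf"
    and M :: "('i,'v) state \<Rightarrow> ('i,'v) obs pmf"
    and pol :: "('i,'v,'a) policy"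
    and L :: nat
  assumes mdp: "miss_MDP Sv T \<iota> M"
begin

lemma S1:
  assumes i: "i \<in> I_always Sv M" and w: "w i = None"
  shows "mu T \<iota> M pol L w = 0"
proof -
  have z: "pmf (M s') w = 0" if s': "s' \<in> state_space Sv" for s'
  proof -
    have "pmf (M s') w = measure_pmf.prob (M s') {w}" by (simp add: measure_pmf_single)
    also have "\<dots> \<le> measure_pmf.prob (M s') {z. z i = None}"
      using w by (intro measure_pmf.finite_measure_mono) auto
    also have "\<dots> = 0" using i s' unfolding I_always_def by auto
    finally show ?thesis by (simp add: order_antisym)
  qed
  have "mu T \<iota> M pol L w = (\<Sum>a\<in>{}. (\<Sum>x\<leftarrow>a. pmf (M (fst x)) w) * pmf (run T \<iota> M pol L) a)"
    unfolding mu_run[OF mdp]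
  proof (rule integral_measure_pmf_real)
    fix tr assume tr: "tr \<in> set_pmf (run T \<iota> M pol L)" and ne: "(\<Sum>x\<leftarrow>tr. pmf (M (fst x)) w) \<noteq> 0"
    have "\<forall>x\<in>set tr. pmf (M (fst x)) w = 0" using run_supp[OF mdp tr] z by auto
    then have "(\<Sum>x\<leftarrow>tr. pmf (M (fst x)) w) = 0" by (induction tr) auto
    then show "tr \<in> {}" using ne by simp
  qed simp
  then show ?thesis by simp
qed

lemma S2: "mu T \<iota> M pol L w \<ge> nu T \<iota> M pol L s * pmf (M s) w"
proof -
  let ?R = "run T \<iota> M pol L"
  have "nu T \<iota> M pol L s * pmf (M s) w = measure_pmf.expectation ?R (\<lambda>tr. indicator {tr. s \<in> visited tr} tr * pmf (M s) w)"
    unfolding nu_def by simp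
  also have "\<dots> \<le> measure_pmf.expectation ?R (\<lambda>tr. \<Sum>x\<leftarrow>tr. pmf (M (fst x)) w)"
  proof (rule integral_mono)
    fix tr
    show "indicator {tr. s \<in> visited tr} tr * pmf (M s) w \<le> (\<Sum>x\<leftarrow>tr. pmf (M (fst x)) w)"
    proof (cases "s \<in> visited tr")
      case True
      then obtain x where x: "x \<in> set tr" "fst x = s" unfolding visited_def by auto
      have "pmf (M (fst x)) w \<le> (\<Sum>x\<leftarrow>tr. pmf (M (fst x)) w)"
        by (rule elem_le_sum_list_real[OF x(1)]) auto
      then show ?thesis using True x by simp
    next
      case False then show ?thesis by (auto intro!: sum_list_nonneg)
    qed
  qed (auto simp: integrable_measure_pmf_finite run_fin[OF mdp])
  finally show ?thesis unfolding mu_run[OF mdp] .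
qed

lemma S4: "Vj T \<iota> M pol L J s \<ge> nu T \<iota> M pol L s"
proof -
  let ?R = "run T \<iota> M pol L"
  have "nu T \<iota> M pol L s = measure_pmf.expectation ?R (\<lambda>tr. indicator {tr. s \<in> visited tr} tr)"
    unfolding nu_def by simp
  also have "\<dots> \<le> Vj T \<iota> M pol L J s" unfolding Vj_def
  proof (rule integral_mono)
    fix tr
    show "indicator {tr. s \<in> visited tr} tr \<le> real (length (filter (\<lambda>x. \<forall>j\<in>J. fst x j = s j) tr))"
    proof (cases "s \<in> visited tr")
      case True
      then obtain x where x: "x \<in> set tr" "fst x = s" unfolding visited_def by auto
      then have "filter (\<lambda>x. \<forall>j\<in>J. fst x j = s j) tr \<noteq> []" by (auto simp: filter_empty_conv)
      then show ?thesis using True by (cases "filter (\<lambda>x. \<forall>j\<in>J. fst x j = s j) tr") auto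
    next
      case False then show ?thesis by simp
    qed
  qed (auto simp: integrable_measure_pmf_finite run_fin[OF mdp])
  finally show ?thesis .
qed

lemma qsum: "(\<Sum>r\<in>UNIV. qr M s r) = 1"
proof -
  have "qr M s r = pmf (map_pmf fR (M s)) r" for r
  proof -
    have "fR -` {r} = {z. fR z = r}" by auto
    then show ?thesis unfolding qr_def by (metis pmf_map)
  qed
  moreover have "(\<Sum>r\<in>UNIV. pmf (map_pmf fR (M s)) r) = 1"
    by (rule sum_pmf_eq_1) auto
  ultimately show ?thesis by simp
qed

lemma mdp_compat: "s \<in> state_space Sv \<Longrightarrow> z \<in> set_pmf (M s) \<Longrightarrow> compatible z s"
  using mdp unfolding miss_MDP_def by blast

lemma qz:
  assumes s: "s \<in> state_space Sv" and c: "compatible z s"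
  shows "pmf (M s) z = qr M s (fR z)"
proof -
  have "{x. fR x = fR z} \<inter> set_pmf (M s) = {z} \<inter> set_pmf (M s)"
  proof (rule set_eqI, rule iffI)
    fix x assume "x \<in> {x. fR x = fR z} \<inter> set_pmf (M s)"
    then have x: "fR x = fR z" "x \<in> set_pmf (M s)" by auto
    have cx: "compatible x s" using mdp_compat[OF s x(2)] .
    have "x = z"
    proof (rule ext)
      fix i
      have e: "(x i \<noteq> None) = (z i \<noteq> None)" using fun_cong[OF x(1)[unfolded fR_def], of i] by simp
      have "x i = Some (s i) \<or> x i = None" "z i = Some (s i) \<or> z i = None"
        using cx c unfolding compatible_def by auto
      then show "x i = z i" using e by auto
    qed
    then show "x \<in> {z} \<inter> set_pmf (M s)" using x by simp
  next
    fix x assume "x \<in> {z} \<inter> set_pmf (M s)"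
    then show "x \<in> {x. fR x = fR z} \<inter> set_pmf (M s)" by auto
  qed
  then have "measure_pmf.prob (M s) {x. fR x = fR z} = measure_pmf.prob (M s) {z}"
    by (rule prob_eq_supp)
  then show ?thesis unfolding qr_def by (simp add: measure_pmf_single)
qed

lemma reach_SS: "reachable T \<iota> M s \<Longrightarrow> s \<in> state_space Sv"
proof -
  assume "reachable T \<iota> M s"
  then obtain pol' k where p: "measure_pmf.prob (run T \<iota> M pol' k) {tr. s \<in> visited tr} > 0"
    unfolding reachable_def by blast
  have "set_pmf (run T \<iota> M pol' k) \<inter> {tr. s \<in> visited tr} \<noteq> {}"
  proof
    assume "set_pmf (run T \<iota> M pol' k) \<inter> {tr. s \<in> visited tr} = {}"
    then have "measure_pmf.prob (run T \<iota> M pol' k) {tr. s \<in> visited tr} = 0"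
      by (simp add: measure_pmf_zero_iff)
    then show False using p by simp
  qed
  then obtain tr where tr: "tr \<in> set_pmf (run T \<iota> M pol' k)" "s \<in> visited tr" by blast
  then show ?thesis using run_supp[OF mdp tr(1)] unfolding visited_def by auto
qed

lemma K:
  assumes mar: "simple_MAR Sv M" and J: "I_always Sv M \<subseteq> J"
    and s: "s \<in> state_space Sv" and s': "s' \<in> state_space Sv" and r: "\<forall>j\<in>J. r j"
  shows "measure_pmf.prob (M s') (Zj Sv J s r) = (if \<forall>j\<in>J. s' j = s j then qr M s r else 0)"
proof -
  have comp: "compatible z s'" if "z \<in> set_pmf (M s')" for z
    using mdp_compat[OF s' that] .
  show ?thesis
  proof (cases "\<forall>j\<in>J. s' j = s j")
    case True
    have "Zj Sv J s r \<inter> set_pmf (M s') = {z. fR z = r} \<inter> set_pmf (M s')"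
    proof (rule set_eqI, rule iffI)
      fix z assume "z \<in> Zj Sv J s r \<inter> set_pmf (M s')"
      then have z: "z \<in> Zj Sv J s r" "z \<in> set_pmf (M s')" by auto
      have "fR z = r" unfolding fR_def
      proof (rule ext)
        fix i
        from z(1) have "(\<not> r i) = (z i = None)" unfolding Zj_def by auto
        then show "(z i \<noteq> None) = r i" by auto
      qed
      then show "z \<in> {z. fR z = r} \<inter> set_pmf (M s')" using z by auto
    next
      fix z assume "z \<in> {z. fR z = r} \<inter> set_pmf (M s')"
      then have z: "fR z = r" "z \<in> set_pmf (M s')" by auto
      have cz: "compatible z s'" using comp z(2) .
      have zo: "z \<in> obs_space Sv" using compat_OS[OF s' cz] .
      have e: "(z i \<noteq> None) = r i" for i using fun_cong[OF z(1)[unfolded fR_def], of i] by simp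
      have c: "z i = Some (s' i) \<or> z i = None" for i using cz unfolding compatible_def by auto
      have A: "i \<in> J \<longrightarrow> z i = Some (s i)" for i
      proof
        assume iJ: "i \<in> J"
        then have ri: "r i" and "s' i = s i" using True r by auto
        then have "z i \<noteq> None" using e[of i] by simp
        then have "z i = Some (s' i)" using c[of i] by auto
        then show "z i = Some (s i)" using \<open>s' i = s i\<close> by simp
      qed
      have B: "(\<not> r i \<longleftrightarrow> z i = None)" for i using e[of i] by auto
      have "z \<in> Zj Sv J s r" unfolding Zj_def using zo A B by simp
      then show "z \<in> Zj Sv J s r \<inter> set_pmf (M s')" using z(2) by simp
    qed
    then have "measure_pmf.prob (M s') (Zj Sv J s r) = qr M s' r"
      unfolding qr_def by (rule prob_eq_supp)
    also have "\<dots> = qr M s r"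
    proof -
      have m: "\<And>a b. a \<in> state_space Sv \<Longrightarrow> b \<in> state_space Sv \<Longrightarrow> (\<forall>i\<in>I_always Sv M. a i = b i) \<Longrightarrow>
          measure_pmf.prob (M a) {z. fR z = r} = measure_pmf.prob (M b) {z. fR z = r}"
        using mar unfolding simple_MAR_def by blast
      have "\<forall>i\<in>I_always Sv M. s' i = s i" using True J by auto
      from m[OF s' s this] show ?thesis unfolding qr_def .
    qed
    finally show ?thesis using True by simp
  next
    case False
    then obtain j where j: "j \<in> J" "s' j \<noteq> s j" by blast
    have "Zj Sv J s r \<inter> set_pmf (M s') = {}"
    proof (rule equals0I)
      fix z assume "z \<in> Zj Sv J s r \<inter> set_pmf (M s')"
      then have z: "z \<in> Zj Sv J s r" "z \<in> set_pmf (M s')" by auto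
      have "z j = Some (s j)" using z(1) j unfolding Zj_def by auto
      moreover have "z j = Some (s' j) \<or> z j = None" using comp[OF z(2)] unfolding compatible_def by auto
      ultimately show False using j by auto
    qed
    then have "measure_pmf.prob (M s') (Zj Sv J s r) = 0"
      using prob_eq_supp[of "Zj Sv J s r" "M s'" "{}"] by simp
    moreover have "(if \<forall>j\<in>J. s' j = s j then qr M s r else 0) = 0" using False by (rule if_not_P)
    ultimately show ?thesis by simp
  qed
qed

lemma sum_sum_list_swap:
  fixes g :: "_ \<Rightarrow> _ \<Rightarrow> real"
  shows "(\<Sum>w\<in>Z. \<Sum>x\<leftarrow>tr. g x w) = (\<Sum>x\<leftarrow>tr. \<Sum>w\<in>Z. g x w)"
  by (induction tr) (auto simp: sum.distrib)

lemma S3: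
  assumes mar: "simple_MAR Sv M" and J: "I_always Sv M \<subseteq> J"
    and s: "s \<in> state_space Sv" and r: "\<forall>j\<in>J. r j"
  shows "(\<Sum>w\<in>Zj Sv J s r. mu T \<iota> M pol L w) = qr M s r * Vj T \<iota> M pol L J s"
proof -
  let ?R = "run T \<iota> M pol L"
  let ?Z = "Zj Sv J s r"
  have finZ: "finite ?Z" using finite_OS[OF mdp] unfolding Zj_def by auto
  have "(\<Sum>w\<in>?Z. mu T \<iota> M pol L w) = measure_pmf.expectation ?R (\<lambda>tr. \<Sum>w\<in>?Z. \<Sum>x\<leftarrow>tr. pmf (M (fst x)) w)"
    unfolding mu_run[OF mdp]
    by (subst Bochner_Integration.integral_sum) (auto simp: integrable_measure_pmf_finite run_fin[OF mdp])
  also have "\<dots> = measure_pmf.expectation ?R (\<lambda>tr. qr M s r * real (length (filter (\<lambda>x. \<forall>j\<in>J. fst x j = s j) tr)))"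
  proof (rule integral_cong_AE)
    show "AE tr in measure_pmf ?R. (\<Sum>w\<in>?Z. \<Sum>x\<leftarrow>tr. pmf (M (fst x)) w) = qr M s r * real (length (filter (\<lambda>x. \<forall>j\<in>J. fst x j = s j) tr))"
      unfolding AE_measure_pmf_iff
    proof
      fix tr assume tr: "tr \<in> set_pmf ?R"
      have st: "\<forall>x\<in>set tr. fst x \<in> state_space Sv" using run_supp[OF mdp tr] by auto
      have "(\<Sum>w\<in>?Z. \<Sum>x\<leftarrow>tr. pmf (M (fst x)) w) = (\<Sum>x\<leftarrow>tr. \<Sum>w\<in>?Z. pmf (M (fst x)) w)"
        by (rule sum_sum_list_swap)
      also have "\<dots> = (\<Sum>x\<leftarrow>tr. measure_pmf.prob (M (fst x)) ?Z)"
        by (simp add: measure_measure_pmf_finite[OF finZ])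
      also have "\<dots> = (\<Sum>x\<leftarrow>tr. (if \<forall>j\<in>J. fst x j = s j then qr M s r else 0))"
      proof -
        have "map (\<lambda>x. measure_pmf.prob (M (fst x)) ?Z) tr = map (\<lambda>x. (if \<forall>j\<in>J. fst x j = s j then qr M s r else 0)) tr"
        proof (rule map_cong[OF refl])
          fix x assume "x \<in> set tr"
          then have "fst x \<in> state_space Sv" using st by blast
          from K[OF mar J s this r] show "measure_pmf.prob (M (fst x)) ?Z = (if \<forall>j\<in>J. fst x j = s j then qr M s r else 0)" .
        qed
        then show ?thesis by (rule arg_cong[where f=sum_list])
      qed
      also have "\<dots> = qr M s r * real (length (filter (\<lambda>x. \<forall>j\<in>J. fst x j = s j) tr))"
        by (induction tr) (auto simp: algebra_simps)
      finally show "(\<Sum>w\<in>?Z. \<Sum>x\<leftarrow>tr. pmf (M (fst x)) w) = qr M s r * real (length (filter (\<lambda>x. \<forall>j\<in>J. fst x j = s j) tr))" .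
    qed
  qed auto
  also have "\<dots> = qr M s r * Vj T \<iota> M pol L J s"
    unfolding Vj_def by simp
  finally show ?thesis .
qed

end




lemma ratio_bound:
  fixes a b A B n c \<epsilon> :: real
  assumes n: "n > 0" and B: "B > 0" and A0: "0 \<le> A" and AB: "A \<le> B"
    and ha: "\<bar>a - n * A\<bar> \<le> n * c" and hb: "\<bar>b - n * B\<bar> \<le> n * c"
    and c2: "2 * c \<le> B" and c4: "4 * c \<le> \<epsilon> * B"
  shows "\<bar>a / b - A / B\<bar> \<le> \<epsilon>"
proof -
  define x where "x = a / n"
  define y where "y = b / n"
  have hx: "\<bar>x - A\<bar> \<le> c" using ha n unfolding x_def
    by (simp add: abs_le_iff field_simps)
  have hy: "\<bar>y - B\<bar> \<le> c" using hb n unfolding y_def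
    by (simp add: abs_le_iff field_simps)
  have c0: "c \<ge> 0" using hx by linarith
  have y2: "y \<ge> B / 2" using hy c2 by (simp add: abs_le_iff)
  have ypos: "y > 0" using y2 B by linarith
  have ab: "a / b = x / y" unfolding x_def y_def using n by simp
  have "x / y - A / B = (B * (x - A) - A * (y - B)) / (y * B)"
    using ypos B by (simp add: field_simps)
  then have "\<bar>x / y - A / B\<bar> = \<bar>B * (x - A) - A * (y - B)\<bar> / (y * B)"
    using ypos B by (simp add: abs_divide abs_mult)
  also have "\<dots> \<le> (B * c + B * c) / (y * B)"
  proof (rule divide_right_mono)
    have "\<bar>B * (x - A)\<bar> \<le> B * c" using hx B by (simp add: abs_mult mult_left_mono)
    moreover have "\<bar>A * (y - B)\<bar> \<le> B * c"
    proof -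
      have "\<bar>A * (y - B)\<bar> = A * \<bar>y - B\<bar>" using A0 by (simp add: abs_mult)
      also have "\<dots> \<le> B * c" using hy AB A0 c0 by (intro mult_mono) auto
      finally show ?thesis .
    qed
    ultimately show "\<bar>B * (x - A) - A * (y - B)\<bar> \<le> B * c + B * c" by linarith
  qed (use ypos B in simp)
  also have "\<dots> = 2 * c / y" using B ypos by (simp add: field_simps)
  also have "\<dots> \<le> 2 * c / (B / 2)" using y2 B c0 by (intro divide_left_mono) auto
  also have "\<dots> = 4 * c / B" by simp
  also have "\<dots> \<le> \<epsilon>" using c4 B by (simp add: divide_le_eq)
  finally show ?thesis using ab by simp
qed

context
  fixes Sv :: "'i::finite \<Rightarrow> 'v set"
    and T :: "('i,'v) state \<Rightarrow> 'a::finite \<Rightarrow> ('i,'v) state pmf"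
    and \<iota> :: "('i,'v) state pmf"
    and M :: "('i,'v) state \<Rightarrow> ('i,'v) obs pmf"
    and pol :: "('i,'v,'a) policy"
    and L :: nat
  assumes mdp: "miss_MDP Sv T \<iota> M" and mar: "simple_MAR Sv M" and fair: "fair T \<iota> M pol L"
begin

lemma nu_pos: "reachable T \<iota> M s \<Longrightarrow> nu T \<iota> M pol L s > 0"
  using fair unfolding fair_def nu_def by blast

lemma good_imp:
  fixes D :: "('i,'v,'a) hist list" and n :: nat and \<eta> \<epsilon> :: real
  defines "C \<equiv> real (CARD('i \<Rightarrow> bool) * card (obs_space Sv))"
  assumes n: "n > 0" and \<eta>: "\<eta> > 0"
    and dev: "\<forall>w\<in>obs_space Sv. \<bar>real (count_obs D w) - n * mu T \<iota> M pol L w\<bar> < n * \<eta>"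
    and zer: "\<forall>w\<in>obs_space Sv. mu T \<iota> M pol L w = 0 \<longrightarrow> count_obs D w = 0"
    and etamu: "\<forall>w\<in>obs_space Sv. mu T \<iota> M pol L w > 0 \<longrightarrow> \<eta> \<le> mu T \<iota> M pol L w"
    and etanu: "\<forall>s. reachable T \<iota> M s \<longrightarrow> 2 * (C * \<eta>) \<le> nu T \<iota> M pol L s \<and> 4 * (C * \<eta>) \<le> \<epsilon> * nu T \<iota> M pol L s"
  shows "\<forall>s\<in>state_space Sv. reachable T \<iota> M s \<longrightarrow>
           (\<forall>z\<in>obs_space Sv. \<bar>AsMAR Sv D s z - Mprob M s z\<bar> \<le> \<epsilon>)"
proof (intro ballI impI)
  fix s z assume sS: "s \<in> state_space Sv" and reach: "reachable T \<iota> M s" and zO: "z \<in> obs_space Sv"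
  let ?\<mu> = "mu T \<iota> M pol L"
  let ?J = "I_always_hat Sv D"
  let ?V = "Vj T \<iota> M pol L ?J s"
  let ?OS = "obs_space Sv"
  have finOS: "finite ?OS" by (rule finite_OS[OF mdp])
  have nupos: "nu T \<iota> M pol L s > 0" by (rule nu_pos[OF reach])
  have Vpos: "?V > 0" using S4[OF mdp, where pol=pol and L=L and J="?J" and s=s] nupos by linarith
  have cnt0: "count_obs D w = 0" if "j \<in> ?J" "w \<in> ?OS" "w j = None" for j w
  proof -
    have "count_set D {z\<in>?OS. z j = None} = 0" using that(1) unfolding I_always_hat_def by simp
    then have "(\<Sum>z\<in>{z\<in>?OS. z j = None}. count_obs D z) = 0" unfolding count_set_def .
    then show ?thesis using finOS that(2,3) by (subst (asm) sum_eq_0_iff) auto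
  qed
  have IJ: "I_always Sv M \<subseteq> ?J"
  proof
    fix i assume i: "i \<in> I_always Sv M"
    have "count_obs D w = 0" if "w \<in> {z\<in>?OS. z i = None}" for w
      using that zer S1[OF mdp i, where w=w and pol=pol and L=L] by auto
    then have "count_set D {z\<in>?OS. z i = None} = 0" unfolding count_set_def by simp
    then show "i \<in> ?J" unfolding I_always_hat_def by simp
  qed
  have qzero: "qr M s r = 0" if j: "j \<in> ?J" and rj: "\<not> r j" for j r
  proof (rule ccontr)
    assume "qr M s r \<noteq> 0"
    then have "measure_pmf.prob (M s) {z. fR z = r} \<noteq> 0" unfolding qr_def .
    then have "set_pmf (M s) \<inter> {z. fR z = r} \<noteq> {}" by (simp add: measure_pmf_zero_iff)
    then obtain w where w: "w \<in> set_pmf (M s)" "fR w = r" by blast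
    have cw: "compatible w s" using mdp_compat[OF mdp sS w(1)] .
    have wO: "w \<in> ?OS" using compat_OS[OF sS cw] .
    have wj: "w j = None" using w(2) rj unfolding fR_def by auto
    have pw: "pmf (M s) w > 0" using w(1) by (simp add: pmf_positive)
    have "?\<mu> w \<ge> nu T \<iota> M pol L s * pmf (M s) w" by (rule S2[OF mdp])
    moreover have "nu T \<iota> M pol L s * pmf (M s) w > 0" using nupos pw by simp
    ultimately have mupos: "?\<mu> w > 0" by linarith
    then have "\<eta> \<le> ?\<mu> w" using etamu wO by blast
    then have le: "n * \<eta> \<le> n * ?\<mu> w" by (intro mult_left_mono) auto
    have "\<bar>real (count_obs D w) - n * ?\<mu> w\<bar> < n * \<eta>" using dev wO by blast
    moreover have "count_obs D w = 0" using cnt0[OF j wO wj] .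
    ultimately have "\<bar>n * ?\<mu> w\<bar> < n * \<eta>" by simp
    moreover have "n * ?\<mu> w \<ge> 0" using mupos by simp
    ultimately show False using le by simp
  qed
  have sumZ: "(\<Sum>w\<in>Zj Sv ?J s r. ?\<mu> w) = qr M s r * ?V" for r
  proof (cases "\<forall>j\<in>?J. r j")
    case True
    show ?thesis by (rule S3[OF mdp mar IJ sS True])
  next
    case False
    then obtain j where j: "j \<in> ?J" "\<not> r j" by blast
    have "Zj Sv ?J s r = {}" using j unfolding Zj_def by auto
    then show ?thesis using qzero[of j r] j by simp
  qed
  have Zeq: "Z_sr Sv D s r = Zj Sv ?J s r" for r unfolding Z_sr_def Zj_def ..
  have finZ: "finite (Zj Sv ?J s r)" for r using finOS unfolding Zj_def by auto
  have cardZ: "card (Zj Sv ?J s r) \<le> card ?OS" for r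
    using finOS unfolding Zj_def by (intro card_mono) auto
  have devZ: "\<bar>real (count_sr Sv D s r) - n * (qr M s r * ?V)\<bar> \<le> n * (real (card ?OS) * \<eta>)" for r
  proof -
    have "real (count_sr Sv D s r) - n * (qr M s r * ?V) = (\<Sum>w\<in>Zj Sv ?J s r. real (count_obs D w) - n * ?\<mu> w)"
      unfolding count_sr_def count_set_def Zeq sumZ[symmetric]
      by (simp add: sum_subtractf sum_distrib_left)
    also have "\<bar>\<dots>\<bar> \<le> (\<Sum>w\<in>Zj Sv ?J s r. \<bar>real (count_obs D w) - n * ?\<mu> w\<bar>)"
      by (rule sum_abs)
    also have "\<dots> \<le> (\<Sum>w\<in>Zj Sv ?J s r. n * \<eta>)"
      using dev unfolding Zj_def by (intro sum_mono) auto
    also have "\<dots> = real (card (Zj Sv ?J s r)) * (n * \<eta>)" by simp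
    also have "\<dots> \<le> real (card ?OS) * (n * \<eta>)"
      using cardZ[of r] n \<eta> by (intro mult_right_mono) auto
    finally show ?thesis by (simp add: algebra_simps)
  qed
  have Cge: "real (card ?OS) \<le> C"
  proof -
    have "1 \<le> CARD('i \<Rightarrow> bool)" by (simp add: Suc_le_eq)
    then have "card ?OS * 1 \<le> CARD('i \<Rightarrow> bool) * card ?OS" by simp
    then show ?thesis unfolding C_def by (simp only: of_nat_le_iff mult_1_right)
  qed
  have Cnn: "0 \<le> C" unfolding C_def by simp
  have eps: "\<epsilon> > 0"
  proof -
    have "(\<lambda>i. None) \<in> ?OS" unfolding obs_space_def by auto
    then have "card ?OS > 0" using finOS by (auto simp: card_gt_0_iff)
    then have "C > 0" unfolding C_def by simp
    then have "4 * (C * \<eta>) > 0" using \<eta> by simp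
    then have "\<epsilon> * nu T \<iota> M pol L s > 0" using etanu reach by (meson less_le_trans)
    then show ?thesis using nupos by (simp add: zero_less_mult_iff)
  qed
  show "\<bar>AsMAR Sv D s z - Mprob M s z\<bar> \<le> \<epsilon>"
  proof (cases "compatible z s")
    case False
    have "z \<notin> set_pmf (M s)" using mdp_compat[OF mdp sS] False by blast
    then have "Mprob M s z = 0" by (simp add: set_pmf_iff)
    then show ?thesis using False eps unfolding AsMAR_def by simp
  next
    case True
    define a where "a = real (count_sr Sv D s (fR z))"
    define b where "b = (\<Sum>r\<in>(UNIV :: ('i \<Rightarrow> bool) set). real (count_sr Sv D s r))"
    define A where "A = qr M s (fR z) * ?V"
    have asm: "AsMAR Sv D s z = a / b" unfolding AsMAR_def a_def b_def using True by simp
    have pm: "Mprob M s z = A / ?V" unfolding A_def using qz[OF mdp sS True] Vpos by simp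
    have q01: "0 \<le> qr M s (fR z)" "qr M s (fR z) \<le> 1" unfolding qr_def by auto
    have BV: "(\<Sum>r\<in>(UNIV :: ('i \<Rightarrow> bool) set). qr M s r * ?V) = ?V"
      using qsum[OF mdp, of s] by (simp add: sum_distrib_right[symmetric])
    have ha: "\<bar>a - n * A\<bar> \<le> n * (C * \<eta>)"
    proof -
      have "\<bar>a - n * A\<bar> \<le> n * (real (card ?OS) * \<eta>)" using devZ[of "fR z"] unfolding a_def A_def .
      also have "\<dots> \<le> n * (C * \<eta>)" using Cge \<eta> by (intro mult_left_mono mult_right_mono) auto
      finally show ?thesis .
    qed
    have hb: "\<bar>b - n * ?V\<bar> \<le> n * (C * \<eta>)"
    proof -
      have "(\<Sum>r\<in>(UNIV :: ('i \<Rightarrow> bool) set). real (count_sr Sv D s r) - n * (qr M s r * ?V))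
          = b - n * (\<Sum>r\<in>(UNIV :: ('i \<Rightarrow> bool) set). qr M s r * ?V)"
        unfolding b_def by (simp add: sum_subtractf sum_distrib_left)
      then have "b - n * ?V = (\<Sum>r\<in>(UNIV :: ('i \<Rightarrow> bool) set). real (count_sr Sv D s r) - n * (qr M s r * ?V))"
        by (simp only: BV)
      also have "\<bar>\<dots>\<bar> \<le> (\<Sum>r\<in>(UNIV :: ('i \<Rightarrow> bool) set). \<bar>real (count_sr Sv D s r) - n * (qr M s r * ?V)\<bar>)"
        by (rule sum_abs)
      also have "\<dots> \<le> (\<Sum>r\<in>(UNIV :: ('i \<Rightarrow> bool) set). n * (real (card ?OS) * \<eta>))"
        by (intro sum_mono devZ)
      also have "\<dots> = n * (C * \<eta>)" unfolding C_def by (simp add: algebra_simps)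
      finally show ?thesis .
    qed
    have "\<bar>a / b - A / ?V\<bar> \<le> \<epsilon>"
    proof (rule ratio_bound[OF _ Vpos _ _ ha hb])
      show "real n > 0" using n by simp
      show "0 \<le> A" unfolding A_def using q01 Vpos by simp
      show "A \<le> ?V" unfolding A_def using q01 Vpos by (simp add: mult_left_le_one_le)
      have "2 * (C * \<eta>) \<le> nu T \<iota> M pol L s" using etanu reach by blast
      then show "2 * (C * \<eta>) \<le> ?V" using S4[OF mdp, where pol=pol and L=L and J="?J" and s=s] by linarith
      have "\<epsilon> * nu T \<iota> M pol L s \<le> \<epsilon> * ?V" using S4[OF mdp, where pol=pol and L=L and J="?J" and s=s] eps by simp
      then show "4 * (C * \<eta>) \<le> \<epsilon> * ?V" using etanu reach by (meson order_trans)
    qed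
    then show ?thesis using asm pm by simp
  qed
qed

end




lemma ev_lt: "(c::real) > 0 \<Longrightarrow> eventually (\<lambda>\<eta>. \<eta> < c) (at_right 0)"
  by (auto simp: eventually_at_right_field intro!: exI[of _ c])

lemma count_real: "real (count_obs D w) = (\<Sum>h\<leftarrow>D. real (cntw w h))"
  unfolding count_obs_cntw by (induction D) auto

context
  fixes Sv :: "'i::finite \<Rightarrow> 'v set"
    and T :: "('i,'v) state \<Rightarrow> 'a::finite \<Rightarrow> ('i,'v) state pmf"
    and \<iota> :: "('i,'v) state pmf"
    and M :: "('i,'v) state \<Rightarrow> ('i,'v) obs pmf"
    and pol :: "('i,'v,'a) policy"
    and L :: nat
  assumes mdp: "miss_MDP Sv T \<iota> M" and mar: "simple_MAR Sv M" and fair: "fair T \<iota> M pol L"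
begin

lemma mu_bounds: "0 \<le> mu T \<iota> M pol L w \<and> mu T \<iota> M pol L w \<le> L"
proof
  show "0 \<le> mu T \<iota> M pol L w" unfolding mu_def by (rule integral_nonneg_AE) auto
  have "mu T \<iota> M pol L w \<le> measure_pmf.expectation (history_pmf T \<iota> M pol L) (\<lambda>_. real L)"
    unfolding mu_def
  proof (rule integral_mono_AE)
    show "AE h in measure_pmf (history_pmf T \<iota> M pol L). real (cntw w h) \<le> real L"
      unfolding AE_measure_pmf_iff
    proof
      fix h assume h: "h \<in> set_pmf (history_pmf T \<iota> M pol L)"
      have "cntw w h \<le> length h" unfolding cntw_def by (rule length_filter_le)
      then show "real (cntw w h) \<le> real L" using HP_len[OF mdp h] by simp
    qed
  qed (auto simp: integrable_measure_pmf_finite HP_fin[OF mdp])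
  then show "mu T \<iota> M pol L w \<le> L" by simp
qed

lemma part1:
  assumes eps: "\<epsilon> > 0" and d0: "0 < \<delta>" and d1: "\<delta> < 1"
  shows "\<exists>nstar::nat. measure_pmf.prob (iid_pmf nstar (history_pmf T \<iota> M pol L))
              {D. \<forall>s\<in>state_space Sv. reachable T \<iota> M s \<longrightarrow>
                    (\<forall>z\<in>obs_space Sv. \<bar>AsMAR Sv D s z - Mprob M s z\<bar> \<le> \<epsilon>)} \<ge> \<delta>"
proof -
  let ?OS = "obs_space Sv" and ?SS = "state_space Sv"
  let ?\<mu> = "mu T \<iota> M pol L" and ?\<nu> = "nu T \<iota> M pol L"
  let ?HP = "history_pmf T \<iota> M pol L"
  define K where "K = card ?OS"
  define C where "C = real (CARD('i \<Rightarrow> bool) * card ?OS)"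
  have finOS: "finite ?OS" by (rule finite_OS[OF mdp])
  have finSS: "finite ?SS" by (rule finite_SS[OF mdp])
  have Kpos: "K > 0"
  proof -
    have "(\<lambda>i. None) \<in> ?OS" unfolding obs_space_def by auto
    then show ?thesis unfolding K_def using finOS by (auto simp: card_gt_0_iff)
  qed
  have Cpos: "C > 0" unfolding C_def using Kpos K_def by simp
  have evA: "eventually (\<lambda>\<eta>. \<forall>w\<in>?OS. ?\<mu> w > 0 \<longrightarrow> \<eta> \<le> ?\<mu> w) (at_right 0)"
  proof (rule eventually_ball_finite[OF finOS], rule ballI)
    fix w assume "w \<in> ?OS"
    show "eventually (\<lambda>\<eta>. ?\<mu> w > 0 \<longrightarrow> \<eta> \<le> ?\<mu> w) (at_right 0)"
    proof (cases "?\<mu> w > 0")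
      case True
      show ?thesis using ev_lt[OF True] by eventually_elim auto
    next
      case False then show ?thesis by simp
    qed
  qed
  have evB: "eventually (\<lambda>\<eta>. \<forall>s\<in>?SS. reachable T \<iota> M s \<longrightarrow> 2 * (C * \<eta>) \<le> ?\<nu> s \<and> 4 * (C * \<eta>) \<le> \<epsilon> * ?\<nu> s) (at_right 0)"
  proof (rule eventually_ball_finite[OF finSS], rule ballI)
    fix s assume "s \<in> ?SS"
    show "eventually (\<lambda>\<eta>. reachable T \<iota> M s \<longrightarrow> 2 * (C * \<eta>) \<le> ?\<nu> s \<and> 4 * (C * \<eta>) \<le> \<epsilon> * ?\<nu> s) (at_right 0)"
    proof (cases "reachable T \<iota> M s")
      case True
      have nup: "?\<nu> s > 0" by (rule nu_pos[OF mdp mar fair True])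
      have c1: "?\<nu> s / (2 * C) > 0" using nup Cpos by simp
      have c2: "\<epsilon> * ?\<nu> s / (4 * C) > 0" using nup Cpos eps by simp
      show ?thesis using ev_lt[OF c1] ev_lt[OF c2]
      proof eventually_elim
        case (elim \<eta>)
        have "2 * (C * \<eta>) \<le> ?\<nu> s" using elim(1) Cpos by (simp add: field_simps)
        moreover have "4 * (C * \<eta>) \<le> \<epsilon> * ?\<nu> s" using elim(2) Cpos by (simp add: field_simps)
        ultimately show ?case by simp
      qed
    next
      case False then show ?thesis by simp
    qed
  qed
  have "eventually (\<lambda>\<eta>. \<eta> > 0 \<and> (\<forall>w\<in>?OS. ?\<mu> w > 0 \<longrightarrow> \<eta> \<le> ?\<mu> w) \<and>
      (\<forall>s\<in>?SS. reachable T \<iota> M s \<longrightarrow> 2 * (C * \<eta>) \<le> ?\<nu> s \<and> 4 * (C * \<eta>) \<le> \<epsilon> * ?\<nu> s)) (at_right (0::real))"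
    using eventually_at_right_less[of "0::real"] evA evB by eventually_elim auto
  moreover have nb: "at_right (0::real) \<noteq> bot" by simp
  ultimately obtain \<eta> where \<eta>: "\<eta> > 0" and etamu: "\<forall>w\<in>?OS. ?\<mu> w > 0 \<longrightarrow> \<eta> \<le> ?\<mu> w"
    and etanu0: "\<forall>s\<in>?SS. reachable T \<iota> M s \<longrightarrow> 2 * (C * \<eta>) \<le> ?\<nu> s \<and> 4 * (C * \<eta>) \<le> \<epsilon> * ?\<nu> s"
    using eventually_happens' by blast
  have etanu: "\<forall>s. reachable T \<iota> M s \<longrightarrow> 2 * (C * \<eta>) \<le> ?\<nu> s \<and> 4 * (C * \<eta>) \<le> \<epsilon> * ?\<nu> s"
    using etanu0 reach_SS[OF mdp] by blast
  define X where "X = real K * (real L)^2 / (\<eta>^2 * (1 - \<delta>))"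
  define n where "n = nat \<lceil>X\<rceil> + 1"
  have npos: "n > 0" unfolding n_def by simp
  have nX: "real n \<ge> X" unfolding n_def by linarith
  have Xnn: "X \<ge> 0" unfolding X_def using d1 by simp
  have bound: "real K * ((real L)^2 / (real n * \<eta>^2)) \<le> 1 - \<delta>"
  proof -
    have "real K * (real L)^2 = X * (\<eta>^2 * (1 - \<delta>))" unfolding X_def using \<eta> d1 by simp
    also have "\<dots> \<le> real n * (\<eta>^2 * (1 - \<delta>))" using nX \<eta> d1 by (intro mult_right_mono) auto
    finally have "real K * (real L)^2 \<le> (1 - \<delta>) * (real n * \<eta>^2)" by (simp add: algebra_simps)
    then show ?thesis using npos \<eta> by (simp add: divide_le_eq)
  qed
  let ?P = "iid_pmf n ?HP"
  define f :: "('i,'v) obs \<Rightarrow> ('i,'v,'a) hist \<Rightarrow> real" where "f w h = real (cntw w h)" for w h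
  have Ef: "measure_pmf.expectation ?HP (f w) = ?\<mu> w" for w unfolding f_def mu_def ..
  define Bad where "Bad w = {D. n * \<eta> \<le> \<bar>(\<Sum>h\<leftarrow>D. f w h) - n * measure_pmf.expectation ?HP (f w)\<bar>} \<union>
       (if ?\<mu> w = 0 then {D. (\<Sum>h\<leftarrow>D. f w h) \<noteq> 0} else {})" for w
  have pBad: "measure_pmf.prob ?P (Bad w) \<le> (real L)^2 / (real n * \<eta>^2)" for w
  proof -
    have p1: "measure_pmf.prob ?P {D. n * \<eta> \<le> \<bar>(\<Sum>h\<leftarrow>D. f w h) - n * measure_pmf.expectation ?HP (f w)\<bar>}
        \<le> (real L)^2 / (real n * \<eta>^2)"
    proof (rule iid_conc[OF HP_fin[OF mdp] _ npos \<eta>])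
      fix h assume h: "h \<in> set_pmf ?HP"
      have "cntw w h \<le> length h" unfolding cntw_def by (rule length_filter_le)
      then have "f w h \<le> L" "0 \<le> f w h" unfolding f_def using HP_len[OF mdp h] by auto
      then show "\<bar>f w h - measure_pmf.expectation ?HP (f w)\<bar> \<le> real L"
        unfolding Ef using mu_bounds[of w] by (simp add: abs_le_iff)
    qed
    have p2: "measure_pmf.prob ?P (if ?\<mu> w = 0 then {D. (\<Sum>h\<leftarrow>D. f w h) \<noteq> 0} else {}) = 0"
    proof (cases "?\<mu> w = 0")
      case True
      have "measure_pmf.prob ?P {D. (\<Sum>h\<leftarrow>D. f w h) \<noteq> 0} = 0"
      proof (rule iid_zero[OF HP_fin[OF mdp]])
        show "measure_pmf.expectation ?HP (f w) = 0" using Ef[of w] True by simp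
      qed (simp add: f_def)
      then show ?thesis using True by simp
    qed simp
    have "measure_pmf.prob ?P (Bad w) \<le> measure_pmf.prob ?P {D. n * \<eta> \<le> \<bar>(\<Sum>h\<leftarrow>D. f w h) - n * measure_pmf.expectation ?HP (f w)\<bar>}
        + measure_pmf.prob ?P (if ?\<mu> w = 0 then {D. (\<Sum>h\<leftarrow>D. f w h) \<noteq> 0} else {})"
      unfolding Bad_def by (rule measure_Un_le) auto
    then show ?thesis using p1 p2 by simp
  qed
  define G :: "('i,'v,'a) hist list set" where "G = {D. \<forall>w\<in>?OS. \<bar>real (count_obs D w) - n * ?\<mu> w\<bar> < n * \<eta> \<and> (?\<mu> w = 0 \<longrightarrow> count_obs D w = 0)}"
  have compG: "UNIV - G \<subseteq> (\<Union>w\<in>?OS. Bad w)"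
  proof
    fix D assume "D \<in> UNIV - G"
    then obtain w where w: "w \<in> ?OS" and nw: "\<not> (\<bar>real (count_obs D w) - n * ?\<mu> w\<bar> < n * \<eta> \<and> (?\<mu> w = 0 \<longrightarrow> count_obs D w = 0))"
      unfolding G_def by blast
    have cr: "real (count_obs D w) = (\<Sum>h\<leftarrow>D. f w h)" unfolding f_def by (rule count_real)
    have "D \<in> Bad w"
    proof (cases "\<bar>real (count_obs D w) - n * ?\<mu> w\<bar> < n * \<eta>")
      case True
      then have "?\<mu> w = 0" "count_obs D w \<noteq> 0" using nw by auto
      then show ?thesis unfolding Bad_def using cr by auto
    next
      case False
      then show ?thesis unfolding Bad_def using cr Ef[of w] by auto
    qed
    then show "D \<in> (\<Union>w\<in>?OS. Bad w)" using w by blast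
  qed
  have "measure_pmf.prob ?P (UNIV - G) \<le> measure_pmf.prob ?P (\<Union>w\<in>?OS. Bad w)"
    using compG by (intro measure_pmf.finite_measure_mono) auto
  also have "\<dots> \<le> (\<Sum>w\<in>?OS. measure_pmf.prob ?P (Bad w))"
    using finOS by (intro measure_pmf.finite_measure_subadditive_finite) auto
  also have "\<dots> \<le> (\<Sum>w\<in>?OS. (real L)^2 / (real n * \<eta>^2))"
    by (intro sum_mono pBad)
  also have "\<dots> = real K * ((real L)^2 / (real n * \<eta>^2))" unfolding K_def by simp
  also have "\<dots> \<le> 1 - \<delta>" by (rule bound)
  finally have "measure_pmf.prob ?P (UNIV - G) \<le> 1 - \<delta>" .
  moreover have "measure_pmf.prob ?P (UNIV - G) = 1 - measure_pmf.prob ?P G"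
    using measure_pmf.prob_compl[of G ?P] by simp
  ultimately have PG: "measure_pmf.prob ?P G \<ge> \<delta>" by simp
  have sub: "G \<subseteq> {D. \<forall>s\<in>?SS. reachable T \<iota> M s \<longrightarrow> (\<forall>z\<in>?OS. \<bar>AsMAR Sv D s z - Mprob M s z\<bar> \<le> \<epsilon>)}"
  proof
    fix D assume D: "D \<in> G"
    have dev: "\<forall>w\<in>?OS. \<bar>real (count_obs D w) - n * ?\<mu> w\<bar> < n * \<eta>" using D unfolding G_def by blast
    have zer: "\<forall>w\<in>?OS. ?\<mu> w = 0 \<longrightarrow> count_obs D w = 0" using D unfolding G_def by blast
    show "D \<in> {D. \<forall>s\<in>?SS. reachable T \<iota> M s \<longrightarrow> (\<forall>z\<in>?OS. \<bar>AsMAR Sv D s z - Mprob M s z\<bar> \<le> \<epsilon>)}"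
      using good_imp[OF mdp mar fair npos \<eta> dev zer etamu etanu[unfolded C_def]] by simp
  qed
  have "measure_pmf.prob ?P G \<le> measure_pmf.prob ?P {D. \<forall>s\<in>?SS. reachable T \<iota> M s \<longrightarrow> (\<forall>z\<in>?OS. \<bar>AsMAR Sv D s z - Mprob M s z\<bar> \<le> \<epsilon>)}"
    using sub by (intro measure_pmf.finite_measure_mono) auto
  then show ?thesis using PG by (intro exI[of _ n]) linarith
qed

end

lemma AsMAR_bounds:
  fixes Sv :: "'i::finite \<Rightarrow> 'v set" and D :: "('i,'v,'a) hist list"
  shows "0 \<le> AsMAR Sv D s z \<and> AsMAR Sv D s z \<le> 1"
proof (cases "compatible z s")
  case True
  let ?x = "real (count_sr Sv D s (fR z))"
  let ?S = "(\<Sum>r\<in>(UNIV :: ('i \<Rightarrow> bool) set). real (count_sr Sv D s r))"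
  have "?x \<le> ?S" by (rule member_le_sum) auto
  moreover have "0 \<le> ?x" by simp
  ultimately have "0 \<le> ?x / ?S \<and> ?x / ?S \<le> 1"
    by (cases "?S = 0") (auto simp: divide_le_eq_1)
  then show ?thesis unfolding AsMAR_def using True by simp
qed (simp add: AsMAR_def)

lemma part2:
  fixes Sv :: "'i::finite \<Rightarrow> 'v set"
  assumes "0 < \<delta>" "\<delta> < 1"
  shows "\<exists>\<epsilon>>0. measure_pmf.prob (P :: ('i,'v,'a) hist list pmf)
              {D. \<forall>s\<in>state_space Sv. R s \<longrightarrow>
                    (\<forall>z\<in>obs_space Sv. \<bar>AsMAR Sv D s z - Mprob M s z\<bar> \<le> \<epsilon>)} \<ge> \<delta>"
proof (intro exI[of _ 1] conjI)
  have "{D :: ('i,'v,'a) hist list. \<forall>s\<in>state_space Sv. R s \<longrightarrow> (\<forall>z\<in>obs_space Sv. \<bar>AsMAR Sv D s z - Mprob M s z\<bar> \<le> (1::real))} = UNIV"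
  proof -
    have "\<bar>AsMAR Sv D s z - Mprob M s z\<bar> \<le> 1" for D s z
      using AsMAR_bounds[of Sv D s z] pmf_le_1[of "M s" z] pmf_nonneg[of "M s" z] unfolding abs_le_iff by linarith
    then show ?thesis by blast
  qed
  then show "\<delta> \<le> measure_pmf.prob P {D. \<forall>s\<in>state_space Sv. R s \<longrightarrow> (\<forall>z\<in>obs_space Sv. \<bar>AsMAR Sv D s z - Mprob M s z\<bar> \<le> 1)}"
    using assms by simp
qed simp


theorem theorem1:
  fixes Sv :: "'i::finite \<Rightarrow> 'v set"
    and T :: "('i,'v) state \<Rightarrow> 'a::finite \<Rightarrow> ('i,'v) state pmf"
    and \<iota> :: "('i,'v) state pmf"
    and M :: "('i,'v) state \<Rightarrow> ('i,'v) obs pmf"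
    and \<pi>b :: "('i,'v,'a) policy"
    and L :: nat
  assumes mdp: "miss_MDP Sv T \<iota> M"
    and mar: "simple_MAR Sv M"
    and fair: "fair T \<iota> M \<pi>b L"
  shows "(\<forall>\<epsilon>>0. \<forall>\<delta>. 0 < \<delta> \<and> \<delta> < 1 \<longrightarrow>
           (\<exists>nstar::nat. measure_pmf.prob (iid_pmf nstar (history_pmf T \<iota> M \<pi>b L))
              {D. \<forall>s\<in>state_space Sv. reachable T \<iota> M s \<longrightarrow>
                    (\<forall>z\<in>obs_space Sv. \<bar>AsMAR Sv D s z - Mprob M s z\<bar> \<le> \<epsilon>)} \<ge> \<delta>))
       \<and> (\<forall>k::nat. \<forall>\<delta>. 0 < \<delta> \<and> \<delta> < 1 \<longrightarrow>
           (\<exists>\<epsilon>>0. measure_pmf.prob (iid_pmf k (history_pmf T \<iota> M \<pi>b L))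
              {D. \<forall>s\<in>state_space Sv. reachable T \<iota> M s \<longrightarrow>
                    (\<forall>z\<in>obs_space Sv. \<bar>AsMAR Sv D s z - Mprob M s z\<bar> \<le> \<epsilon>)} \<ge> \<delta>))"
  apply (intro conjI allI impI)
   apply (erule conjE)
   apply (rule part1[OF mdp mar fair]; assumption)
  apply (erule conjE)
  apply (rule part2; assumption)
  done

end
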